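(* Let $\bar G=(\bar V,\bar E)$ be a connected undirected graph whose node set is totally ordered by $<$. Define the directed graph $G_{VC}=(V_{VC},E_{VC})$ by $V_{VC}=\bar V\sqcup\{\hat r\}$ and $E_{VC}=\{(i,j):\{i,j\}\in\bar E,\ i<j\}\cup\{(\hat r,i):i\in\bar V\}$. Then the minimum extraction width of an extraction order of $G_{VC}$ rooted at $\hat r$ equals the size of a minimum vertex cover of $\bar G$ plus one.
   Context: An extraction order of a directed graph $G=(V,E)$ is a rooted directed acyclic graph $G^{\mathcal X}=(V,E^{\mathcal X},s)$ in which every node is reachable from the root $s$ and $E^{\mathcal X}$ is obtained from $E$ by reversing some (possibly no) edges. A confluence from $a$ to $b$ is a pair of directed paths in $E^{\mathcal X}$ from $a$ to $b$ sharing no node other than $a,b$. For $e\in E^{\mathcal X}$, its label set $\mathcal L_e$ is the set of nodes $b$ such that $e$ lies on some confluence with target $b$. Each node's outgoing edges are partitioned into bags: classes of the equivalence relation generated by $e\sim e'$ iff $\mathcal L_e\cap\mathcal L_{e'}\ne\emptyset$; bag label set $\mathcal L_B=\bigcup_{e\in B}\mathcal L_e$. The extraction width is $1+\max|\mathcal L_B|$ over all bags of all nodes. *)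

theory Defs
  imports Main
begin

definition dpath :: "('v \<times> 'v) set \<Rightarrow> 'v list \<Rightarrow> 'v \<Rightarrow> 'v \<Rightarrow> bool" where
  "dpath D p a b \<longleftrightarrow> p \<noteq> [] \<and> hd p = a \<and> last p = b \<and> distinct p \<and>
     (\<forall>i. Suc i < length p \<longrightarrow> (p ! i, p ! Suc i) \<in> D)"

definition path_edges :: "'v list \<Rightarrow> ('v \<times> 'v) set" where
  "path_edges p = set (zip p (tl p))"

definition extraction_order ::
  "'v set \<Rightarrow> ('v \<times> 'v) set \<Rightarrow> ('v \<times> 'v) set \<Rightarrow> 'v \<Rightarrow> bool" where
  "extraction_order V E D s \<longleftrightarrow>
     s \<in> V \<and>
     (\<exists>R \<subseteq> E. D = (E - R) \<union> R\<inverse>) \<and>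
     acyclic D \<and>
     (\<forall>v\<in>V. (s, v) \<in> D\<^sup>*)"

definition confluence :: "('v \<times> 'v) set \<Rightarrow> 'v \<Rightarrow> 'v \<Rightarrow> 'v list \<Rightarrow> 'v list \<Rightarrow> bool" where
  "confluence D a b p q \<longleftrightarrow>
     dpath D p a b \<and> dpath D q a b \<and> p \<noteq> q \<and> set p \<inter> set q \<subseteq> {a, b}"

definition label :: "('v \<times> 'v) set \<Rightarrow> ('v \<times> 'v) \<Rightarrow> 'v set" where
  "label D e = {b. \<exists>a p q. confluence D a b p q \<and> (e \<in> path_edges p \<or> e \<in> path_edges q)}"

definition out_edges :: "('v \<times> 'v) set \<Rightarrow> 'v \<Rightarrow> ('v \<times> 'v) set" where
  "out_edges D u = {e \<in> D. fst e = u}"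

definition bag_rel :: "('v \<times> 'v) set \<Rightarrow> 'v \<Rightarrow> (('v \<times> 'v) \<times> ('v \<times> 'v)) set" where
  "bag_rel D u = {(e, e'). e \<in> out_edges D u \<and> e' \<in> out_edges D u \<and>
                            label D e \<inter> label D e' \<noteq> {}}"

definition bags :: "('v \<times> 'v) set \<Rightarrow> 'v \<Rightarrow> ('v \<times> 'v) set set" where
  "bags D u = (\<lambda>e. {e' \<in> out_edges D u. (e, e') \<in> (bag_rel D u)\<^sup>*}) ` out_edges D u"

definition bag_label :: "('v \<times> 'v) set \<Rightarrow> ('v \<times> 'v) set \<Rightarrow> 'v set" where
  "bag_label D B = (\<Union>e\<in>B. label D e)"

text \<open>Extraction width (the maximum over an empty collection of bags is taken as 0).\<close>
definition extraction_width :: "'v set \<Rightarrow> ('v \<times> 'v) set \<Rightarrow> nat" where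
  "extraction_width V D =
     1 + Max ({0} \<union> {card (bag_label D B) | u B. u \<in> V \<and> B \<in> bags D u})"

definition ugraph :: "'a set \<Rightarrow> 'a set set \<Rightarrow> bool" where
  "ugraph V E \<longleftrightarrow> finite V \<and> (\<forall>e\<in>E. e \<subseteq> V \<and> card e = 2)"

definition uconnected :: "'a set \<Rightarrow> 'a set set \<Rightarrow> bool" where
  "uconnected V E \<longleftrightarrow> V \<noteq> {} \<and>
     (\<forall>u\<in>V. \<forall>v\<in>V. (u, v) \<in> {(x, y). {x, y} \<in> E}\<^sup>*)"

definition vertex_cover :: "'a set \<Rightarrow> 'a set set \<Rightarrow> 'a set \<Rightarrow> bool" where
  "vertex_cover V E C \<longleftrightarrow> C \<subseteq> V \<and> (\<forall>e\<in>E. e \<inter> C \<noteq> {})"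

definition min_vertex_cover :: "'a set \<Rightarrow> 'a set set \<Rightarrow> nat" where
  "min_vertex_cover V E = Min {card C | C. vertex_cover V E C}"

section \<open>The construction G_VC (root = None, node i = Some i)\<close>

definition VC_nodes :: "'a set \<Rightarrow> 'a option set" where
  "VC_nodes V = insert None (Some ` V)"

definition VC_edges :: "'a::linorder set \<Rightarrow> 'a set set \<Rightarrow> ('a option \<times> 'a option) set" where
  "VC_edges V E = {(Some i, Some j) | i j. {i, j} \<in> E \<and> i < j} \<union> {(None, Some i) | i. i \<in> V}"

end

theory Submission
  imports Defs
begin

definition Sd :: "('a option \<times> 'a option) set \<Rightarrow> 'a set" where
  "Sd D = {j. \<exists>i. (Some i, Some j) \<in> D}"

lemma eo_sub:
  assumes "extraction_order N F D s"
  shows "D \<subseteq> F \<union> F\<inverse>"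
  using assms unfolding extraction_order_def by blast

lemma eo_acyc: assumes "extraction_order N F D s" shows "(x,x) \<notin> D\<^sup>+"
  using assms unfolding extraction_order_def acyclic_def by blast

lemma eo_root:
  assumes eo: "extraction_order (VC_nodes V) (VC_edges V E) D None" and i: "i \<in> V"
  shows "(None, Some i) \<in> D"
proof -
  obtain R where R: "R \<subseteq> VC_edges V E" "D = (VC_edges V E - R) \<union> R\<inverse>"
    using eo unfolding extraction_order_def by blast
  have inE: "(None, Some i) \<in> VC_edges V E" using i unfolding VC_edges_def by blast
  have reach: "(None, Some i) \<in> D\<^sup>*" using eo i unfolding extraction_order_def VC_nodes_def by blast
  show ?thesis
  proof (cases "(None, Some i) \<in> R")
    case True
    then have "(Some i, None) \<in> D" using R by blast
    with reach have "(None, None) \<in> D\<^sup>+" by (rule rtrancl_into_trancl1)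
    with eo_acyc[OF eo] show ?thesis by blast
  next
    case False
    then show ?thesis using R inE by blast
  qed
qed

lemma eo_edge:
  assumes eo: "extraction_order (VC_nodes V) (VC_edges V E) D None"
    and e: "{i,j} \<in> E" and ne: "i \<noteq> j"
  shows "(Some i, Some j) \<in> D \<or> (Some j, Some i) \<in> D"
proof -
  obtain R where R: "R \<subseteq> VC_edges V E" "D = (VC_edges V E - R) \<union> R\<inverse>"
    using eo unfolding extraction_order_def by blast
  have "(Some i, Some j) \<in> VC_edges V E \<or> (Some j, Some i) \<in> VC_edges V E"
  proof (cases "i < j")
    case True then show ?thesis using e unfolding VC_edges_def by blast
  next
    case False then have "j < i" using ne by simp
    then show ?thesis using e unfolding VC_edges_def by (auto simp: insert_commute)
  qed
  then show ?thesis using R by blast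
qed

lemma eo_SomeE:
  assumes eo: "extraction_order (VC_nodes V) (VC_edges V E) D None"
    and g: "ugraph V E" and d: "(Some i, y) \<in> D"
  shows "\<exists>j. y = Some j \<and> {i,j} \<in> E \<and> i \<noteq> j \<and> i \<in> V \<and> j \<in> V"
proof -
  have "(Some i, y) \<in> VC_edges V E \<or> (y, Some i) \<in> VC_edges V E"
    using eo_sub[OF eo] d by blast
  moreover have "y \<noteq> None"
  proof
    assume yn: "y = None"
    have "i \<in> V" using d eo_sub[OF eo] yn unfolding VC_edges_def by blast
    then have "(None, Some i) \<in> D\<^sup>*" using eo unfolding extraction_order_def VC_nodes_def by blast
    then have "(None, None) \<in> D\<^sup>+" using d yn by (metis rtrancl_into_trancl1)
    with eo_acyc[OF eo] show False by blast
  qed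
  ultimately obtain j where j: "y = Some j" "{i,j} \<in> E" "i < j \<or> j < i"
    unfolding VC_edges_def by (auto simp: insert_commute)
  then have "i \<noteq> j" by auto
  moreover have "{i,j} \<subseteq> V" using g j unfolding ugraph_def by blast
  ultimately show ?thesis using j by blast
qed

lemma dpath_same: assumes "dpath D p a a" shows "p = [a]"
proof -
  have d: "p \<noteq> []" "hd p = a" "last p = a" "distinct p" using assms unfolding dpath_def by auto
  have "length p = 1"
  proof (rule ccontr)
    assume "length p \<noteq> 1"
    then have l: "length p \<ge> 2" using d(1) by (cases p) (auto simp: Suc_le_eq)
    have "p ! 0 = p ! (length p - 1)" using d by (simp add: hd_conv_nth last_conv_nth)
    then have "0 = length p - 1" using nth_eq_iff_index_eq[OF d(4), of 0 "length p - 1"] l d(1) by simp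
    then show False using l d(1) by simp
  qed
  then show ?thesis using d by (cases p) auto
qed

lemma conf_two_preds:
  assumes c: "confluence D a b p q"
  shows "\<exists>x y. x \<noteq> y \<and> (x,b) \<in> D \<and> (y,b) \<in> D"
proof -
  have dp: "dpath D p a b" and dq: "dpath D q a b" and pq: "p \<noteq> q"
    and inter: "set p \<inter> set q \<subseteq> {a,b}" using c unfolding confluence_def by auto
  have ab: "a \<noteq> b"
  proof
    assume "a = b"
    then have "p = [a]" "q = [a]" using dpath_same dp dq by metis+
    then show False using pq by simp
  qed
  have pre: "\<exists>x. (x,b) \<in> D \<and> x \<in> set r \<and> x \<noteq> b \<and> (x = a \<longrightarrow> r = [a,b])"
    if dr: "dpath D r a b" for r
  proof -
    have d: "r \<noteq> []" "hd r = a" "last r = b" "distinct r"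
      and st: "\<And>i. Suc i < length r \<Longrightarrow> (r ! i, r ! Suc i) \<in> D"
      using dr unfolding dpath_def by auto
    have l: "length r \<ge> 2"
    proof (rule ccontr)
      assume "\<not> length r \<ge> 2"
      then have "length r = 1" using d(1) by (cases r) (auto simp: Suc_le_eq)
      then have "hd r = last r" by (cases r) auto
      then show False using d ab by simp
    qed
    define x where "x = r ! (length r - 2)"
    have lb: "r ! (length r - 1) = b" using d by (simp add: last_conv_nth)
    have "(x, b) \<in> D" using st[of "length r - 2"] l lb unfolding x_def
      by (metis Suc_diff_Suc Suc_1 diff_Suc_1 diff_less le_eq_less_or_eq less_Suc_eq_le
          numeral_2_eq_2 zero_less_Suc lessI Suc_le_lessD)
    moreover have "x \<in> set r" using l unfolding x_def by simp
    moreover have "x \<noteq> b" using l lb nth_eq_iff_index_eq[OF d(4), of "length r - 2" "length r - 1"] unfolding x_def by simp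
    moreover have "r = [a,b]" if "x = a"
    proof -
      have "r ! 0 = a" using d by (simp add: hd_conv_nth)
      then have "r ! (length r - 2) = r ! 0" using that x_def by simp
      then have "length r - 2 = 0" using l d(1) nth_eq_iff_index_eq[OF d(4), of "length r - 2" 0] by simp
      then have "length r = 2" using l d(1) by simp
      then show ?thesis using d lb \<open>r ! 0 = a\<close>
        by (cases r; cases "tl r") auto
    qed
    ultimately show ?thesis by blast
  qed
  obtain x where x: "(x,b) \<in> D" "x \<in> set p" "x \<noteq> b" "x = a \<longrightarrow> p = [a,b]" using pre[OF dp] by blast
  obtain y where y: "(y,b) \<in> D" "y \<in> set q" "y \<noteq> b" "y = a \<longrightarrow> q = [a,b]" using pre[OF dq] by blast
  have "x \<noteq> y"
  proof
    assume "x = y"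
    then have "x = a" using x y inter by blast
    then show False using x y pq \<open>x = y\<close> by simp
  qed
  then show ?thesis using x y by blast
qed

lemma label_sub:
  assumes eo: "extraction_order (VC_nodes V) (VC_edges V E) D None" and g: "ugraph V E"
  shows "label D e \<subseteq> Some ` Sd D"
proof
  fix b assume "b \<in> label D e"
  then obtain a p q where cf: "confluence D a b p q" unfolding label_def by blast
  obtain x y where xy: "x \<noteq> y" "(x,b) \<in> D" "(y,b) \<in> D" using conf_two_preds[OF cf] by blast
  have "\<exists>i. (Some i, b) \<in> D"
  proof (cases x)
    case None
    then obtain i where "y = Some i" using xy(1) None by (cases y) auto
    then show ?thesis using xy(3) by blast
  next
    case (Some i)
    then show ?thesis using xy(2) by blast
  qed
  then obtain i where i: "(Some i, b) \<in> D" by blast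
  obtain j where "b = Some j" using eo_SomeE[OF eo g i] by blast
  then show "b \<in> Some ` Sd D" using i unfolding Sd_def by blast
qed

lemma Sd_sub:
  assumes eo: "extraction_order (VC_nodes V) (VC_edges V E) D None" and g: "ugraph V E"
  shows "Sd D \<subseteq> V"
proof
  fix j assume "j \<in> Sd D"
  then obtain i where d: "(Some i, Some j) \<in> D" unfolding Sd_def by blast
  show "j \<in> V" using eo_SomeE[OF eo g d] by auto
qed

lemma conf_root:
  assumes eo: "extraction_order (VC_nodes V) (VC_edges V E) D None" and g: "ugraph V E"
    and d: "(Some i, Some j) \<in> D"
  shows "Some j \<in> label D (None, Some j) \<and> Some j \<in> label D (None, Some i)"
proof -
  have ij: "i \<noteq> j" "i \<in> V" "j \<in> V" using eo_SomeE[OF eo g d] by auto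
  have r1: "(None, Some i) \<in> D" "(None, Some j) \<in> D" using eo_root[OF eo] ij by auto
  have c: "confluence D None (Some j) [None, Some j] [None, Some i, Some j]"
    unfolding confluence_def dpath_def using r1 d ij
    by (auto simp: less_Suc_eq nth_Cons')
  have "(None, Some j) \<in> path_edges [None, Some j]" "(None, Some i) \<in> path_edges [None, Some i, Some j]"
    unfolding path_edges_def by auto
  then show ?thesis using c unfolding label_def by blast
qed

lemma width_eq:
  assumes eo: "extraction_order (VC_nodes V) (VC_edges V E) D None" and g: "ugraph V E"
    and conn: "uconnected V E"
  shows "extraction_width (VC_nodes V) D = 1 + card (Sd D)"
proof -
  define X where "X = {card (bag_label D B) | u B. u \<in> VC_nodes V \<and> B \<in> bags D u}"
  have finV: "finite V" using g unfolding ugraph_def by blast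
  have finS: "finite (Some ` Sd D)" using Sd_sub[OF eo g] finV by (meson finite_imageI finite_subset)
  have cS: "card (Some ` Sd D) = card (Sd D)" by (simp add: card_image)
  have bl: "bag_label D B \<subseteq> Some ` Sd D" for B
    unfolding bag_label_def using label_sub[OF eo g] by blast
  have le: "card (bag_label D B) \<le> card (Sd D)" for B
    using card_mono[OF finS bl[of B]] cS by simp
  have Xsub: "X \<subseteq> {..card (Sd D)}" unfolding X_def using le by auto
  have finX: "finite ({0} \<union> X)" using Xsub finite_subset by blast
  have up: "Max ({0} \<union> X) \<le> card (Sd D)"
    using finX Xsub by (subst Max_le_iff) auto
  have low: "card (Sd D) \<le> Max ({0} \<union> X)"
  proof (cases "Sd D = {}")
    case True then show ?thesis by simp
  next
    case False
    then obtain j0 where j0: "j0 \<in> Sd D" by blast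
    then have j0V: "j0 \<in> V" using Sd_sub[OF eo g] by blast
    define e0 where "e0 = ((None::'a option), Some j0)"
    define B where "B = {e' \<in> out_edges D None. (e0, e') \<in> (bag_rel D None)\<^sup>*}"
    have oe: "(None, Some v) \<in> out_edges D None" if "v \<in> V" for v
      using eo_root[OF eo that] unfolding out_edges_def by simp
    have Bb: "B \<in> bags D None" unfolding bags_def B_def using oe[OF j0V] e0_def by blast
    have reach: "(e0, (None, Some v)) \<in> (bag_rel D None)\<^sup>*" if "v \<in> V" for v
    proof -
      have "(j0, v) \<in> {(x, y). {x, y} \<in> E}\<^sup>*" using conn j0V that unfolding uconnected_def by blast
      then show ?thesis
      proof (induction rule: rtrancl_induct)
        case base then show ?case unfolding e0_def by simp
      next
        case (step x y)
        then have exy: "{x,y} \<in> E" by simp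
        then have "{x,y} \<subseteq> V" "card {x,y} = 2" using g unfolding ugraph_def by auto
        then have xy: "x \<in> V" "y \<in> V" "x \<noteq> y" by auto
        have "label D (None, Some x) \<inter> label D (None, Some y) \<noteq> {}"
        proof (cases "(Some x, Some y) \<in> D")
          case True then show ?thesis using conf_root[OF eo g True] by blast
        next
          case False
          then have d: "(Some y, Some x) \<in> D" using eo_edge[OF eo exy xy(3)] by blast
          then show ?thesis using conf_root[OF eo g d] by blast
        qed
        then have "((None, Some x), (None, Some y)) \<in> bag_rel D None"
          unfolding bag_rel_def using oe xy by blast
        then show ?case by (rule rtrancl_into_rtrancl[OF step.IH])
      qed
    qed
    have "Some ` Sd D \<subseteq> bag_label D B"
    proof
      fix b assume "b \<in> Some ` Sd D"
      then obtain i j where b: "b = Some j" "(Some i, Some j) \<in> D" unfolding Sd_def by blast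
      then have jV: "j \<in> V" using Sd_sub[OF eo g] unfolding Sd_def by blast
      have "(None, Some j) \<in> B" unfolding B_def using oe[OF jV] reach[OF jV] by blast
      moreover have "b \<in> label D (None, Some j)" using conf_root[OF eo g b(2)] b by simp
      ultimately show "b \<in> bag_label D B" unfolding bag_label_def by blast
    qed
    then have "card (Sd D) \<le> card (bag_label D B)"
      using card_mono[OF finite_subset[OF bl finS]] cS by metis
    moreover have "card (bag_label D B) \<in> {0} \<union> X" unfolding X_def VC_nodes_def using Bb by blast
    ultimately show ?thesis using Max_ge[OF finX] le_trans by blast
  qed
  show ?thesis unfolding extraction_width_def X_def[symmetric] using up low by simp
qed

lemma Sd_cover:
  assumes eo: "extraction_order (VC_nodes V) (VC_edges V E) D None" and g: "ugraph V E"
  shows "vertex_cover V E (Sd D)"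
  unfolding vertex_cover_def
proof (intro conjI ballI)
  show "Sd D \<subseteq> V" by (rule Sd_sub[OF eo g])
next
  fix e assume e: "e \<in> E"
  then have "card e = 2" using g unfolding ugraph_def by blast
  then obtain x y where xy: "e = {x,y}" "x \<noteq> y" by (auto simp: card_2_iff)
  have "(Some x, Some y) \<in> D \<or> (Some y, Some x) \<in> D" using eo_edge[OF eo _ xy(2)] e xy(1) by blast
  then have "y \<in> Sd D \<or> x \<in> Sd D" unfolding Sd_def by blast
  then show "e \<inter> Sd D \<noteq> {}" using xy(1) by blast
qed

lemma covers_finite:
  assumes g: "ugraph V E"
  shows "finite {card C | C. vertex_cover V E C}"
proof -
  have "finite V" using g unfolding ugraph_def by blast
  moreover have "{card C | C. vertex_cover V E C} \<subseteq> card ` Pow V"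
    unfolding vertex_cover_def by blast
  ultimately show ?thesis by (meson finite_Pow_iff finite_imageI finite_subset)
qed

definition lt :: "'a::linorder set \<Rightarrow> 'a \<Rightarrow> 'a \<Rightarrow> bool" where
  "lt C i j \<longleftrightarrow> (i \<notin> C \<and> j \<in> C) \<or> ((i \<in> C \<longleftrightarrow> j \<in> C) \<and> i < j)"

definition D0 :: "'a::linorder set \<Rightarrow> 'a set set \<Rightarrow> 'a set \<Rightarrow> ('a option \<times> 'a option) set" where
  "D0 V E C = {(None, Some i) | i. i \<in> V} \<union> {(Some i, Some j) | i j. {i,j} \<in> E \<and> lt C i j}"

definition Tr :: "'a::linorder set \<Rightarrow> ('a option \<times> 'a option) set" where
  "Tr C = {(None, Some i) | i. True} \<union> {(Some i, Some j) | i j. lt C i j}"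

lemma trans_Tr: "trans (Tr C)"
  unfolding trans_def Tr_def lt_def by auto

lemma irr_Tr: "(x, x) \<notin> Tr C"
  unfolding Tr_def lt_def by auto

lemma D0_eo:
  assumes g: "ugraph V E" and vc: "vertex_cover V E C"
  shows "extraction_order (VC_nodes V) (VC_edges V E) (D0 V E C) None"
proof -
  let ?F = "VC_edges V E" and ?D = "D0 V E C"
  have lt_total: "lt C i j \<or> lt C j i" if "i \<noteq> j" for i j
    using that unfolding lt_def by auto
  have lt_asym: "\<not> lt C j i" if "lt C i j" for i j
    using that unfolding lt_def by auto
  have eq: "?D = (?F - (?F - ?D)) \<union> (?F - ?D)\<inverse>"
  proof
    show "?D \<subseteq> (?F - (?F - ?D)) \<union> (?F - ?D)\<inverse>"
    proof
      fix x assume x: "x \<in> ?D"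
      show "x \<in> (?F - (?F - ?D)) \<union> (?F - ?D)\<inverse>"
      proof (cases "x \<in> ?F")
        case True then show ?thesis using x by blast
      next
        case False
        from x have "x \<in> {(None, Some i) | i. i \<in> V} \<or> x \<in> {(Some i, Some j) | i j. {i,j} \<in> E \<and> lt C i j}"
          unfolding D0_def by blast
        moreover have "x \<notin> {(None, Some i) | i. i \<in> V}" using False unfolding VC_edges_def by blast
        ultimately obtain i j where ij: "x = (Some i, Some j)" "{i,j} \<in> E" "lt C i j" by blast
        have "\<not> i < j" using False ij unfolding VC_edges_def by blast
        moreover have "i \<noteq> j" using ij(3) unfolding lt_def by auto
        ultimately have "j < i" by simp
        then have "(Some j, Some i) \<in> ?F" using ij(2) unfolding VC_edges_def by (auto simp: insert_commute)
        moreover have "(Some j, Some i) \<notin> ?D" using lt_asym[OF ij(3)] unfolding D0_def by auto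
        ultimately show ?thesis using ij(1) by blast
      qed
    qed
  next
    show "(?F - (?F - ?D)) \<union> (?F - ?D)\<inverse> \<subseteq> ?D"
    proof
      fix x assume x: "x \<in> (?F - (?F - ?D)) \<union> (?F - ?D)\<inverse>"
      show "x \<in> ?D"
      proof (cases "x \<in> ?F - (?F - ?D)")
        case True then show ?thesis by blast
      next
        case False
        then obtain a b where ab: "x = (a,b)" "(b,a) \<in> ?F" "(b,a) \<notin> ?D" using x by auto
        have "b \<noteq> None"
        proof
          assume "b = None"
          then obtain i where "a = Some i" "i \<in> V" using ab(2) unfolding VC_edges_def by blast
          then show False using ab(3) \<open>b = None\<close> unfolding D0_def by blast
        qed
        then obtain i j where ij: "b = Some i" "a = Some j" "{i,j} \<in> E" "i < j"
          using ab(2) unfolding VC_edges_def by blast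
        have "\<not> lt C i j" using ab(3) ij unfolding D0_def by blast
        moreover have "i \<noteq> j" using ij(4) by simp
        ultimately have "lt C j i" using lt_total by blast
        moreover have "{j,i} \<in> E" using ij(3) by (simp add: insert_commute)
        ultimately show ?thesis using ab(1) ij unfolding D0_def by blast
      qed
    qed
  qed
  have sub: "?D \<subseteq> Tr C" unfolding D0_def Tr_def by blast
  have acyc: "acyclic ?D"
    unfolding acyclic_def
  proof
    fix x
    have "?D\<^sup>+ \<subseteq> (Tr C)\<^sup>+" using sub by (rule trancl_mono_subset)
    also have "\<dots> = Tr C" using trans_Tr by (rule trancl_id)
    finally show "(x, x) \<notin> ?D\<^sup>+" using irr_Tr by blast
  qed
  have reach: "\<forall>v\<in>VC_nodes V. (None, v) \<in> ?D\<^sup>*"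
  proof
    fix v assume "v \<in> VC_nodes V"
    then have "v = None \<or> (\<exists>i\<in>V. v = Some i)" unfolding VC_nodes_def by blast
    then show "(None, v) \<in> ?D\<^sup>*"
    proof
      assume "v = None" then show ?thesis by simp
    next
      assume "\<exists>i\<in>V. v = Some i"
      then obtain i where "i \<in> V" "v = Some i" by blast
      then have "(None, v) \<in> ?D" unfolding D0_def by blast
      then show ?thesis by (rule r_into_rtrancl)
    qed
  qed
  have "None \<in> VC_nodes V" unfolding VC_nodes_def by simp
  moreover have "\<exists>R \<subseteq> ?F. ?D = (?F - R) \<union> R\<inverse>"
    using eq by blast
  ultimately show ?thesis unfolding extraction_order_def using acyc reach by blast
qed

lemma D0_Sd:
  assumes vc: "vertex_cover V E C"
  shows "Sd (D0 V E C) \<subseteq> C"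
proof
  fix j assume "j \<in> Sd (D0 V E C)"
  then obtain i where "(Some i, Some j) \<in> D0 V E C" unfolding Sd_def by blast
  then have ij: "{i,j} \<in> E" "lt C i j" unfolding D0_def by blast+
  show "j \<in> C"
  proof (rule ccontr)
    assume "j \<notin> C"
    then have "i \<notin> C" using ij(2) unfolding lt_def by blast
    then have "{i,j} \<inter> C = {}" using \<open>j \<notin> C\<close> by blast
    then show False using vc ij(1) unfolding vertex_cover_def by blast
  qed
qed

theorem lemma38:
  fixes V :: "'a::linorder set" and E :: "'a set set"
  assumes "ugraph V E" and "uconnected V E"
  shows "Min {extraction_width (VC_nodes V) D | D.
              extraction_order (VC_nodes V) (VC_edges V E) D None}
         = min_vertex_cover V E + 1"
proof -
  note g = assms(1) and conn = assms(2)
  define W where "W = {extraction_width (VC_nodes V) D | D.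
              extraction_order (VC_nodes V) (VC_edges V E) D None}"
  have finV: "finite V" using g unfolding ugraph_def by blast
  have vcV: "vertex_cover V E V"
    unfolding vertex_cover_def
  proof (intro conjI ballI)
    fix e assume e: "e \<in> E"
    then have "e \<subseteq> V" "card e = 2" using g unfolding ugraph_def by auto
    then show "e \<inter> V \<noteq> {}" by (metis card.empty inf.absorb1 zero_neq_numeral)
  qed simp
  have ne: "{card C | C. vertex_cover V E C} \<noteq> {}" using vcV by blast
  have "min_vertex_cover V E \<in> {card C | C. vertex_cover V E C}"
    unfolding min_vertex_cover_def using Min_in[OF covers_finite[OF g] ne] .
  then obtain C where C: "vertex_cover V E C" "card C = min_vertex_cover V E" by auto
  have lowS: "min_vertex_cover V E \<le> card (Sd D)"
    if eo: "extraction_order (VC_nodes V) (VC_edges V E) D None" for D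
  proof -
    have "card (Sd D) \<in> {card C | C. vertex_cover V E C}" using Sd_cover[OF eo g] by blast
    then show ?thesis unfolding min_vertex_cover_def by (rule Min_le[OF covers_finite[OF g]])
  qed
  have weq: "extraction_width (VC_nodes V) D = 1 + card (Sd D)"
    if eo: "extraction_order (VC_nodes V) (VC_edges V E) D None" for D
    using width_eq[OF eo g conn] .
  have eo0: "extraction_order (VC_nodes V) (VC_edges V E) (D0 V E C) None"
    by (rule D0_eo[OF g C(1)])
  have finC: "finite C" using C(1) finV unfolding vertex_cover_def by (meson finite_subset)
  have "card (Sd (D0 V E C)) \<le> card C" using card_mono[OF finC D0_Sd[OF C(1)]] .
  then have w0: "extraction_width (VC_nodes V) (D0 V E C) = min_vertex_cover V E + 1"
    using weq[OF eo0] lowS[OF eo0] C(2) by simp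
  have finW: "finite W"
  proof (rule finite_subset)
    show "W \<subseteq> {..1 + card V}"
    proof
      fix w assume "w \<in> W"
      then obtain D where eo: "extraction_order (VC_nodes V) (VC_edges V E) D None"
        and w: "w = extraction_width (VC_nodes V) D" unfolding W_def by blast
      have "card (Sd D) \<le> card V" using card_mono[OF finV Sd_sub[OF eo g]] .
      then show "w \<in> {..1 + card V}" using w weq[OF eo] by simp
    qed
  qed simp
  have "Min W = min_vertex_cover V E + 1"
  proof (rule Min_eqI[OF finW])
    fix y assume "y \<in> W"
    then obtain D where eo: "extraction_order (VC_nodes V) (VC_edges V E) D None"
      and y: "y = extraction_width (VC_nodes V) D" unfolding W_def by blast
    show "min_vertex_cover V E + 1 \<le> y" using y weq[OF eo] lowS[OF eo] by simp
  next
    show "min_vertex_cover V E + 1 \<in> W" unfolding W_def using eo0 w0[symmetric] by blast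
  qed
  then show ?thesis unfolding W_def .
qed

end
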